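(* Let $f\neq 0$ and $\mu\in\mathbb{R}$ with $\mu\notin\{0,1,-1\}$. Consider the plane curve $\gamma(\xi)=\big(r(\xi)\cos\xi,\ r(\xi)\sin\xi\big)$, where $$r(\xi)=f\left(\mu\cos\xi+\sqrt{2-\cos^2\xi}\right),$$ traversed in the direction of increasing $\xi$, and let $k(\xi)$ denote its signed curvature with respect to this orientation. Then: (i) At $\xi=0$ the curve passes through $(f(\mu+1),0)$ with unit tangent $(\cos\tau,\sin\tau)$, $\tau=\frac{\pi}{2}\,\mathrm{sgn}[f(\mu+1)]$, and curvature $k(0)=\dfrac{2\mu}{|f|\,|\mu+1|\,(\mu+1)}$; at $\xi=\pi$ it passes through $(f(\mu-1),0)$ with tangent angle $\tau=\frac{\pi}{2}\,\mathrm{sgn}[f(\mu-1)]$ and curvature $k(\pi)=\dfrac{2\mu}{|f|\,|\mu-1|\,(\mu-1)}$. (ii) The circles of curvature (osculating circles) of the curve at the points $\xi=0$ and $\xi=\pi$ are concentric, with common center $\left(f\,\dfrac{\mu^2-1}{2\mu},\,0\right)$. (iii) If $|\mu|>1$ (so that $k(0)$ and $k(\pi)$ have the same sign), then along the arc $0\le\xi\le\pi$ the curvature varies monotonically with arc length, and the total turning angle of the tangent along this arc is $2\pi$.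
   Context: Signed curvature of a regular parametrized plane curve $(x(\xi),y(\xi))$ is $k=(x'y''-y'x'')/(x'^2+y'^2)^{3/2}$. The curve is the one given in implicit form by $\left(x^2+y^2-\mu f x\right)^2=f^2(x^2+2y^2)$. The "circle of curvature" at a point is the circle tangent to the curve there with radius $1/|k|$ and center on the normal on the side of curvature. *)

theory Defs
  imports "HOL-Analysis.Analysis"
begin

definition rad :: "real \<Rightarrow> real \<Rightarrow> real \<Rightarrow> real" where
  "rad f \<mu> \<xi> = f * (\<mu> * cos \<xi> + sqrt (2 - (cos \<xi>)^2))"

definition cx :: "real \<Rightarrow> real \<Rightarrow> real \<Rightarrow> real" where
  "cx f \<mu> \<xi> = rad f \<mu> \<xi> * cos \<xi>"

definition cy :: "real \<Rightarrow> real \<Rightarrow> real \<Rightarrow> real" where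
  "cy f \<mu> \<xi> = rad f \<mu> \<xi> * sin \<xi>"

definition speed :: "(real \<Rightarrow> real) \<Rightarrow> (real \<Rightarrow> real) \<Rightarrow> real \<Rightarrow> real" where
  "speed x y t = sqrt ((deriv x t)^2 + (deriv y t)^2)"

definition signed_curvature :: "(real \<Rightarrow> real) \<Rightarrow> (real \<Rightarrow> real) \<Rightarrow> real \<Rightarrow> real" where
  "signed_curvature x y t =
     (deriv x t * deriv (deriv y) t - deriv y t * deriv (deriv x) t)
     / ((deriv x t)^2 + (deriv y t)^2) powr (3/2)"

definition unit_tangent :: "(real \<Rightarrow> real) \<Rightarrow> (real \<Rightarrow> real) \<Rightarrow> real \<Rightarrow> real \<times> real" where
  "unit_tangent x y t = (deriv x t / speed x y t, deriv y t / speed x y t)"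

definition unit_normal :: "(real \<Rightarrow> real) \<Rightarrow> (real \<Rightarrow> real) \<Rightarrow> real \<Rightarrow> real \<times> real" where
  "unit_normal x y t = (- deriv y t / speed x y t, deriv x t / speed x y t)"

text \<open>Centre of the circle of curvature: on the normal line, at distance 1/|k|,
  on the side towards which the curve bends (direction sgn k times the left normal).\<close>
definition osc_center :: "(real \<Rightarrow> real) \<Rightarrow> (real \<Rightarrow> real) \<Rightarrow> real \<Rightarrow> real \<times> real" where
  "osc_center x y t =
     (let k = signed_curvature x y t; (n1, n2) = unit_normal x y t
      in (x t + (1 / \<bar>k\<bar>) * sgn k * n1, y t + (1 / \<bar>k\<bar>) * sgn k * n2))"

definition osc_radius :: "(real \<Rightarrow> real) \<Rightarrow> (real \<Rightarrow> real) \<Rightarrow> real \<Rightarrow> real" where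
  "osc_radius x y t = 1 / \<bar>signed_curvature x y t\<bar>"

definition arclen :: "(real \<Rightarrow> real) \<Rightarrow> (real \<Rightarrow> real) \<Rightarrow> real \<Rightarrow> real" where
  "arclen x y t = integral {0..t} (speed x y)"

end

theory Submission imports Defs begin

definition Wf :: "real \<Rightarrow> real" where "Wf t = sqrt (2 - (cos t)^2)"
definition Rf :: "real \<Rightarrow> real \<Rightarrow> real" where "Rf m t = m * cos t + Wf t"
definition R1f :: "real \<Rightarrow> real \<Rightarrow> real" where "R1f m t = sin t * (cos t - m * Wf t) / Wf t"
definition R2f :: "real \<Rightarrow> real \<Rightarrow> real" where "R2f m t = 2 / Wf t ^ 3 - Rf m t"

lemma cos_sq_le1: "(cos (t::real))^2 \<le> 1"
  using sin_cos_squared_add[of t] zero_le_power2[of "sin t"] by linarith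

lemma Wf_sq: "Wf t ^ 2 = 2 - (cos t)^2"
  using cos_sq_le1[of t] by (simp add: Wf_def)

lemma Wf_ge1: "Wf t \<ge> 1"
  using cos_sq_le1[of t] by (simp add: Wf_def)

lemma Wf_pos: "Wf t > 0" using Wf_ge1[of t] by simp
lemma Wf_nz[simp]: "Wf t \<noteq> 0" using Wf_pos[of t] by simp

lemma Wf_deriv[derivative_intros]: "(Wf has_real_derivative (cos t * sin t / Wf t)) (at t within S)"
proof -
  have "((\<lambda>t. sqrt (2 - (cos t)^2)) has_real_derivative (cos t * sin t / Wf t)) (at t within S)"
    using cos_sq_le1[of t]
    by (auto intro!: derivative_eq_intros simp: Wf_def field_simps power2_eq_square)
  then show ?thesis by (simp add: Wf_def[abs_def])
qed

lemma Rf_deriv[derivative_intros]: "(Rf m has_real_derivative R1f m t) (at t within S)"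
proof -
  have "((\<lambda>t. m * cos t + Wf t) has_real_derivative R1f m t) (at t within S)"
    using Wf_pos[of t]
    by (auto intro!: derivative_eq_intros simp: R1f_def field_simps)
  then show ?thesis by (simp add: Rf_def[abs_def])
qed

lemma R1_id:
  fixes w c s m :: real
  assumes "w > 0" "w^2 = 2 - c^2" "s^2 = 1 - c^2"
  shows "(c * c - s * s) / w - s * c * (c * s / w) / w^2 - m * c = 2 / w^3 - (m * c + w)"
  apply (insert assms(1)) apply (simp add: field_simps) apply (insert assms(2,3)) by algebra

lemma sin_sq: "(sin (t::real))^2 = 1 - (cos t)^2" using sin_cos_squared_add[of t] by linarith

lemma R1f_deriv[derivative_intros]: "(R1f m has_real_derivative R2f m t) (at t within S)"
proof -
  have "((\<lambda>t. sin t * cos t / Wf t - m * sin t) has_real_derivative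
     (cos t * cos t - sin t * sin t) / Wf t - sin t * cos t * (cos t * sin t / Wf t) / (Wf t)^2 - m * cos t) (at t within S)"
    using Wf_pos[of t]
    by (auto intro!: derivative_eq_intros simp: field_simps power2_eq_square)
  also have "(cos t * cos t - sin t * sin t) / Wf t - sin t * cos t * (cos t * sin t / Wf t) / (Wf t)^2 - m * cos t = R2f m t"
    unfolding R2f_def Rf_def by (rule R1_id[OF Wf_pos Wf_sq sin_sq])
  also have "(\<lambda>t. sin t * cos t / Wf t - m * sin t) = R1f m"
    by (intro ext) (simp add: R1f_def field_simps)
  finally show ?thesis .
qed

definition "X1f f m t = f*(R1f m t * cos t - Rf m t * sin t)"
definition "Y1f f m t = f*(R1f m t * sin t + Rf m t * cos t)"
definition "X2f f m t = f*(R2f m t * cos t - 2*R1f m t * sin t - Rf m t * cos t)"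
definition "Y2f f m t = f*(R2f m t * sin t + 2*R1f m t * cos t - Rf m t * sin t)"

lemma rad_eq: "rad f m t = f * Rf m t"
  by (simp add: rad_def Rf_def Wf_def)

lemma cx_eq: "cx f m = (\<lambda>t. f * Rf m t * cos t)"
  by (intro ext) (simp add: cx_def rad_eq)
lemma cy_eq: "cy f m = (\<lambda>t. f * Rf m t * sin t)"
  by (intro ext) (simp add: cy_def rad_eq)

lemma X1_deriv: "(cx f m has_real_derivative X1f f m t) (at t)"
  unfolding cx_eq X1f_def by (auto intro!: derivative_eq_intros simp: algebra_simps)
lemma Y1_deriv: "(cy f m has_real_derivative Y1f f m t) (at t)"
  unfolding cy_eq Y1f_def by (auto intro!: derivative_eq_intros simp: algebra_simps)
lemma X2_deriv: "(X1f f m has_real_derivative X2f f m t) (at t)"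
  unfolding X1f_def[abs_def] X2f_def by (auto intro!: derivative_eq_intros simp: algebra_simps)
lemma Y2_deriv: "(Y1f f m has_real_derivative Y2f f m t) (at t)"
  unfolding Y1f_def[abs_def] Y2f_def by (auto intro!: derivative_eq_intros simp: algebra_simps)

lemma deriv_cx: "deriv (cx f m) = X1f f m"
  using X1_deriv DERIV_imp_deriv by blast
lemma deriv_cy: "deriv (cy f m) = Y1f f m"
  using Y1_deriv DERIV_imp_deriv by blast
lemma deriv2_cx: "deriv (deriv (cx f m)) = X2f f m"
  using X2_deriv DERIV_imp_deriv unfolding deriv_cx by blast
lemma deriv2_cy: "deriv (deriv (cy f m)) = Y2f f m"
  using Y2_deriv DERIV_imp_deriv unfolding deriv_cy by blast

lemma deriv_X1: "deriv (X1f f m) = X2f f m"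
  using X2_deriv DERIV_imp_deriv by blast
lemma deriv_Y1: "deriv (Y1f f m) = Y2f f m"
  using Y2_deriv DERIV_imp_deriv by blast

lemma cross_eq: "X1f f m t * Y2f f m t - Y1f f m t * X2f f m t
   = f^2 * ((Rf m t)^2 + 2 * (R1f m t)^2 - Rf m t * R2f m t)"
proof -
  have h: "(sin t)^2 = 1 - (cos t)^2" by (rule sin_sq)
  show ?thesis unfolding X1f_def Y1f_def X2f_def Y2f_def using h by algebra
qed

lemma sq_eq: "(X1f f m t)^2 + (Y1f f m t)^2 = f^2 * ((Rf m t)^2 + (R1f m t)^2)"
proof -
  have h: "(sin t)^2 = 1 - (cos t)^2" by (rule sin_sq)
  show ?thesis unfolding X1f_def Y1f_def using h by algebra
qed

lemma sq_powr32: "((x::real)^2) powr (3/2) = \<bar>x\<bar>^3"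
proof (cases "x = 0")
  case False
  have "x^2 = \<bar>x\<bar> powr 2" using False by (simp add: powr_realpow)
  then have "(x^2) powr (3/2) = (\<bar>x\<bar> powr 2) powr (3/2)" by simp
  also have "\<dots> = \<bar>x\<bar> powr (2 * (3/2))" by (rule powr_powr)
  also have "\<dots> = \<bar>x\<bar>^3" using False by (simp add: powr_realpow)
  finally show ?thesis .
next
  case True then show ?thesis by simp
qed

lemma special_point:
  fixes x y :: "real \<Rightarrow> real"
  assumes "x t = z" "y t = 0" "deriv x t = 0" "deriv y t = z" "deriv (deriv x) t = -2*f*m"
    "deriv (deriv y) t = 0" "z\<noteq>0" "f\<noteq>0" "m\<noteq>0"
  shows "unit_tangent x y t = (0, sgn z)" "signed_curvature x y t = 2*f*m*z/\<bar>z\<bar>^3"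
    "osc_center x y t = (z - z^2/(2*m*f), 0)"
proof -
  have sp: "speed x y t = \<bar>z\<bar>" using assms by (simp add: speed_def)
  show "unit_tangent x y t = (0, sgn z)" using assms sp by (simp add: unit_tangent_def sgn_if)
  show k: "signed_curvature x y t = 2*f*m*z/\<bar>z\<bar>^3" using assms
    by (simp add: signed_curvature_def sq_powr32)
  have n: "unit_normal x y t = (- sgn z, 0)" using assms sp by (simp add: unit_normal_def sgn_if)
  have "(1 / abs (2*f*m*z/abs z^3)) * sgn (2*f*m*z/\<bar>z\<bar>^3) * (- sgn z) = -(z^2/(2*m*f))"
  proof -
    have fm: "f*m \<noteq> 0" using assms(8,9) by simp
    show ?thesis using assms(7) fm
      by (cases "z > 0"; cases "f*m > 0") (auto simp: sgn_if abs_if field_simps power2_eq_square power3_eq_cube)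
  qed
  then show "osc_center x y t = (z - z^2/(2*m*f), 0)"
    using assms k n by (simp add: osc_center_def Let_def mult_ac)
qed

lemma Wf0: "Wf 0 = 1" by (simp add: Wf_def)
lemma Wfpi: "Wf pi = 1" by (simp add: Wf_def)

lemma at0:
  assumes "f \<noteq> 0" "m \<noteq> 0" "m \<noteq> -1"
  shows "unit_tangent (cx f m) (cy f m) 0 = (0, sgn (f*(m+1)))"
    "signed_curvature (cx f m) (cy f m) 0 = 2*f*m*(f*(m+1))/\<bar>f*(m+1)\<bar>^3"
    "osc_center (cx f m) (cy f m) 0 = (f*(m+1) - (f*(m+1))^2/(2*m*f), 0)"
proof -
  have z: "f*(m+1) \<noteq> 0" using assms by simp
  note sp = special_point[of "cx f m" 0 "f*(m+1)" "cy f m" f m]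
  have a: "cx f m 0 = f*(m+1)" "cy f m 0 = 0" "deriv (cx f m) 0 = 0" "deriv (cy f m) 0 = f*(m+1)"
     "deriv (deriv (cx f m)) 0 = -2*f*m" "deriv (deriv (cy f m)) 0 = 0"
    unfolding deriv_cx deriv_cy deriv_X1 deriv_Y1
    by (simp_all add: cx_eq cy_eq X1f_def Y1f_def X2f_def Y2f_def Rf_def R1f_def R2f_def Wf0 algebra_simps)
  show "unit_tangent (cx f m) (cy f m) 0 = (0, sgn (f*(m+1)))"
    "signed_curvature (cx f m) (cy f m) 0 = 2*f*m*(f*(m+1))/\<bar>f*(m+1)\<bar>^3"
    "osc_center (cx f m) (cy f m) 0 = (f*(m+1) - (f*(m+1))^2/(2*m*f), 0)"
    using sp[OF a z assms(1,2)] by auto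
qed

lemma atpi:
  assumes "f \<noteq> 0" "m \<noteq> 0" "m \<noteq> 1"
  shows "unit_tangent (cx f m) (cy f m) pi = (0, sgn (f*(m-1)))"
    "signed_curvature (cx f m) (cy f m) pi = 2*f*m*(f*(m-1))/\<bar>f*(m-1)\<bar>^3"
    "osc_center (cx f m) (cy f m) pi = (f*(m-1) - (f*(m-1))^2/(2*m*f), 0)"
proof -
  have z: "f*(m-1) \<noteq> 0" using assms by simp
  note sp = special_point[of "cx f m" pi "f*(m-1)" "cy f m" f m]
  have a: "cx f m pi = f*(m-1)" "cy f m pi = 0" "deriv (cx f m) pi = 0" "deriv (cy f m) pi = f*(m-1)"
     "deriv (deriv (cx f m)) pi = -2*f*m" "deriv (deriv (cy f m)) pi = 0"
    unfolding deriv_cx deriv_cy deriv_X1 deriv_Y1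
    by (simp_all add: cx_eq cy_eq X1f_def Y1f_def X2f_def Y2f_def Rf_def R1f_def R2f_def Wfpi algebra_simps)
  show "unit_tangent (cx f m) (cy f m) pi = (0, sgn (f*(m-1)))"
    "signed_curvature (cx f m) (cy f m) pi = 2*f*m*(f*(m-1))/\<bar>f*(m-1)\<bar>^3"
    "osc_center (cx f m) (cy f m) pi = (f*(m-1) - (f*(m-1))^2/(2*m*f), 0)"
    using sp[OF a z assms(1,2)] by auto
qed

lemma tangent_form: "z \<noteq> 0 \<Longrightarrow> (0::real, sgn z) = (cos (pi/2 * sgn z), sin (pi/2 * sgn z))"
  by (cases "z > 0") (auto simp: sgn_if)

lemma curv_form: "(f::real) \<noteq> 0 \<Longrightarrow> u \<noteq> 0 \<Longrightarrow> 2*f*m*(f*u)/\<bar>f*u\<bar>^3 = 2 * m / (\<bar>f\<bar> * \<bar>u\<bar> * u)"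
proof -
  assume h: "f \<noteq> 0" "u \<noteq> 0"
  have "\<bar>f*u\<bar>^3 = \<bar>f*u\<bar> * \<bar>f*u\<bar>^2" by (subst power_Suc[symmetric]) simp
  also have "\<dots> = \<bar>f\<bar> * \<bar>u\<bar> * (f*u)^2" by (simp add: abs_mult power_mult_distrib)
  finally have "\<bar>f*u\<bar>^3 = \<bar>f\<bar> * \<bar>u\<bar> * (f*u)^2" .
  then show ?thesis using h by (simp add: field_simps power2_eq_square)
qed

lemma center_form: "(f::real) \<noteq> 0 \<Longrightarrow> m \<noteq> 0 \<Longrightarrow> f*(m+e) - (f*(m+e))^2/(2*m*f) = f * (m^2 - e^2) / (2*m)"
  by (simp add: field_simps power2_eq_square)

lemma ang_alg:
  fixes N u b a' b' :: real
  assumes "N > 0" "u > 0" "N^2 = (u - N)^2 + b^2"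
  shows "inverse (2*N/u) * (b'*u - b*(inverse N*(2*(a'*(u-N)) + 2*(b'*b))/2 + a')) * 2/(u*u)
     = ((u-N)*b' - b*a')/N^2"
  using assms(1,2) apply (simp add: field_simps) apply (insert assms(3)) by algebra

lemma angle_deriv:
  fixes a b :: "real \<Rightarrow> real"
  assumes da: "(a has_real_derivative a') (at t)" and db: "(b has_real_derivative b') (at t)"
    and pos: "a t^2 + b t^2 > 0" and pos2: "sqrt (a t^2 + b t^2) + a t > 0"
  shows "((\<lambda>t. 2*arctan(b t/(sqrt(a t^2+b t^2) + a t))) has_real_derivative
           (a t*b' - b t*a')/(a t^2+b t^2)) (at t)"
proof -
  define N where "N = sqrt (a t^2 + b t^2)"
  have N2: "N^2 = a t^2 + b t^2" using pos by (simp add: N_def)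
  have Npos: "N > 0" using pos by (simp add: N_def)
  have Na: "N + a t > 0" using pos2 by (simp add: N_def)
  have e1: "1 + (b t/(N + a t))^2 = 2*N/(N + a t)"
  proof -
    have h: "(N + a t)^2 + (b t)^2 = 2*N*(N + a t)" using N2 by algebra
    have "1 + (b t/(N + a t))^2 = ((N + a t)^2 + (b t)^2)/(N + a t)^2"
      using Na by (simp add: field_simps)
    also have "\<dots> = 2*N*(N + a t)/(N + a t)^2" by (simp only: h)
    also have "\<dots> = 2*N/(N + a t)" using Na by (simp add: power2_eq_square)
    finally show ?thesis .
  qed
  show ?thesis
    using pos pos2
    apply (auto intro!: derivative_eq_intros da db)
    apply (fold N_def)
    apply (simp only: e1 N2[symmetric])
    using ang_alg[of N "N + a t" "b t" b' a'] Npos Na N2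
    by (simp add: mult_ac)
qed

definition "Pc m c = (m * sqrt (2 - c^2) + c)^2 + 4*(1 - c^2)"
definition "Qf m t = (Rf m t)^2 + (R1f m t)^2"
definition "Nf m t = (Rf m t)^2 + 2*(R1f m t)^2 - Rf m t * R2f m t"

lemma Pc_cos: "Pc m (cos t) = (m * Wf t + cos t)^2 + 4*(1 - (cos t)^2)"
  by (simp add: Pc_def Wf_def)

lemma Q_alg:
  fixes w c s m :: real
  assumes "w > 0" "w^2 = 2 - c^2" "s^2 = 1 - c^2"
  shows "(m*c + w)^2 + (s * (c - m * w) / w)^2 = ((m * w + c)^2 + 4*(1 - c^2)) / w^2"
  apply (insert assms(1)) apply (simp add: field_simps) apply (insert assms(2,3)) by algebra

lemma Q_eq: "Qf m t = Pc m (cos t) / (Wf t)^2"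
  unfolding Qf_def Pc_cos Rf_def R1f_def by (rule Q_alg[OF Wf_pos Wf_sq sin_sq])

lemma N_eq: "Nf m t = 2 * Qf m t - 2 * Rf m t / (Wf t)^3"
  unfolding Nf_def Qf_def R2f_def by (simp add: algebra_simps power2_eq_square)

lemma Pc_ge:
  assumes "\<bar>m\<bar> > 1" "\<bar>c\<bar> \<le> 1"
  shows "Pc m c \<ge> (\<bar>m\<bar> - 1)^2"
proof -
  define w where "w = sqrt (2 - c^2)"
  have c2: "c^2 \<le> 1" using assms(2) by (simp add: abs_square_le_1)
  have w1: "w \<ge> 1" using c2 by (simp add: w_def)
  have "\<bar>m * w\<bar> \<le> \<bar>m * w + c\<bar> + \<bar>c\<bar>" using abs_triangle_ineq[of "m*w+c" "-c"] by simp
  moreover have "\<bar>m * w\<bar> = \<bar>m\<bar> * w" using w1 by (simp add: abs_mult)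
  moreover have "\<bar>m\<bar> * w - \<bar>c\<bar> \<ge> \<bar>m\<bar> - 1"
    using w1 assms mult_left_mono[of 1 w "\<bar>m\<bar>"] by linarith
  ultimately have h: "\<bar>m * w + c\<bar> \<ge> \<bar>m\<bar> - 1" by linarith
  have "(\<bar>m\<bar> - 1)^2 \<le> \<bar>m * w + c\<bar>^2" using h assms(1) by (intro power_mono) auto
  then have "(m * w + c)^2 \<ge> (\<bar>m\<bar> - 1)^2" by simp
  moreover have "4*(1 - c^2) \<ge> 0" using c2 by simp
  ultimately show ?thesis unfolding Pc_def w_def[symmetric] by linarith
qed

lemma Pc_pos: "\<bar>m\<bar> > 1 \<Longrightarrow> \<bar>c\<bar> \<le> 1 \<Longrightarrow> Pc m c > 0"
proof -
  assume a: "\<bar>m\<bar> > 1" "\<bar>c\<bar> \<le> 1"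
  have "(\<bar>m\<bar> - 1)^2 > 0" using a by simp
  then show ?thesis using Pc_ge[OF a] by linarith
qed

lemma Qf_pos: "\<bar>m\<bar> > 1 \<Longrightarrow> Qf m t > 0"
  using Pc_pos[of m "cos t"] Wf_pos[of t] by (simp add: Q_eq)

lemma ks_eq:
  assumes "f \<noteq> 0" "Qf m t > 0"
  shows "signed_curvature (cx f m) (cy f m) t * speed (cx f m) (cy f m) t = Nf m t / Qf m t"
proof -
  have q: "f^2 * Qf m t > 0" using assms by simp
  have p: "(f^2 * Qf m t) powr (3/2) = (f^2 * Qf m t) * sqrt (f^2 * Qf m t)"
  proof -
    have "(f^2 * Qf m t) powr (3/2) = (f^2 * Qf m t) powr (1 + 1/2)" by simp
    also have "\<dots> = (f^2 * Qf m t) * sqrt (f^2 * Qf m t)"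
      using q by (subst powr_add) (simp add: powr_half_sqrt)
    finally show ?thesis .
  qed
  have s: "sqrt (f^2 * Qf m t) > 0" using q by simp
  show ?thesis
    unfolding signed_curvature_def speed_def deriv_cx deriv_cy deriv_X1 deriv_Y1
      cross_eq sq_eq Qf_def[symmetric] Nf_def[symmetric] p
    using q s assms by (simp add: field_simps)
qed

definition "Aa m t = - sgn m * R1f m t"
definition "Bb m t = - sgn m * Rf m t"
definition "Th m t = t + 2*arctan(Bb m t/(sqrt((Aa m t)^2 + (Bb m t)^2) + Aa m t))"

lemma AB_sq: "m \<noteq> 0 \<Longrightarrow> (Aa m t)^2 + (Bb m t)^2 = Qf m t"
  by (simp add: Aa_def Bb_def Qf_def power_mult_distrib sgn_if)

lemma Aa_nonneg:
  assumes "\<bar>m\<bar> > 1" "0 \<le> t" "t \<le> pi"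
  shows "Aa m t \<ge> 0"
proof -
  have s: "sin t \<ge> 0" using assms by (simp add: sin_ge_zero)
  have W: "Wf t \<ge> 1" by (rule Wf_ge1)
  have c: "\<bar>cos t\<bar> \<le> 1" by simp
  have "sgn m * (cos t - m * Wf t) \<le> 0"
  proof (cases "m > 1")
    case True
    then have "m * 1 \<le> m * Wf t" using W by (intro mult_left_mono) auto
    then have "cos t - m * Wf t \<le> 0" using cos_le_one[of t] True by linarith
    then show ?thesis using True by (simp add: sgn_if)
  next
    case False
    then have m: "m < -1" using assms by auto
    then have "m * Wf t \<le> m * 1" using W by (intro mult_left_mono_neg) auto
    then have "cos t - m * Wf t \<ge> 0" using c m by (simp only: abs_le_iff) linarith
    then show ?thesis using m by (simp add: sgn_if)
  qed
  then have "- sgn m * (sin t * (cos t - m * Wf t)) \<ge> 0"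
    using s by (metis mult.left_commute mult_minus_left neg_0_le_iff_le mult_nonneg_nonpos)
  then show ?thesis using Wf_pos[of t] unfolding Aa_def R1f_def
    by (simp add: divide_nonpos_pos)
qed

lemma Th_deriv:
  assumes "\<bar>m\<bar> > 1" "0 \<le> t" "t \<le> pi"
  shows "(Th m has_real_derivative Nf m t / Qf m t) (at t)"
proof -
  have m0: "m \<noteq> 0" using assms by auto
  have Q: "Qf m t > 0" using Qf_pos assms by blast
  have da: "(Aa m has_real_derivative (- sgn m * R2f m t)) (at t)"
    unfolding Aa_def[abs_def] by (auto intro!: derivative_eq_intros)
  have db: "(Bb m has_real_derivative (- sgn m * R1f m t)) (at t)"
    unfolding Bb_def[abs_def] by (auto intro!: derivative_eq_intros)
  have p1: "(Aa m t)^2 + (Bb m t)^2 > 0" using Q AB_sq[OF m0] by simp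
  have p2: "sqrt ((Aa m t)^2 + (Bb m t)^2) + Aa m t > 0"
    using p1 Aa_nonneg[OF assms] by (simp add: add_pos_nonneg)
  have "((\<lambda>t. t + 2*arctan(Bb m t/(sqrt((Aa m t)^2 + (Bb m t)^2) + Aa m t))) has_real_derivative
      1 + (Aa m t * (- sgn m * R1f m t) - Bb m t * (- sgn m * R2f m t))/((Aa m t)^2 + (Bb m t)^2)) (at t)"
    by (intro DERIV_add DERIV_ident angle_deriv[OF da db p1 p2])
  moreover have "1 + (Aa m t * (- sgn m * R1f m t) - Bb m t * (- sgn m * R2f m t))/((Aa m t)^2 + (Bb m t)^2)
      = Nf m t / Qf m t"
  proof -
    have e: "Aa m t * (- sgn m * R1f m t) - Bb m t * (- sgn m * R2f m t) = Nf m t - Qf m t"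
      using m0 by (simp add: Aa_def Bb_def Nf_def Qf_def sgn_if power2_eq_square algebra_simps)
    show ?thesis unfolding AB_sq[OF m0] e using Q by (simp add: field_simps)
  qed
  ultimately show ?thesis unfolding Th_def[abs_def] by simp
qed

lemma Th0: assumes "\<bar>m\<bar> > 1" shows "Th m 0 = - pi/2"
proof -
  have r: "Rf m 0 = m + 1" "R1f m 0 = 0" by (simp_all add: Rf_def R1f_def Wf0)
  have "Bb m 0 / (sqrt ((Aa m 0)^2 + (Bb m 0)^2) + Aa m 0) = -1"
    using assms by (cases "m > 1") (auto simp: Aa_def Bb_def r sgn_if field_simps)
  then show ?thesis by (simp add: Th_def arctan_minus)
qed

lemma Thpi: assumes "\<bar>m\<bar> > 1" shows "Th m pi = pi + pi/2"
proof -
  have r: "Rf m pi = 1 - m" "R1f m pi = 0" by (simp_all add: Rf_def R1f_def Wfpi)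
  have "Bb m pi / (sqrt ((Aa m pi)^2 + (Bb m pi)^2) + Aa m pi) = 1"
    using assms by (cases "m > 1") (auto simp: Aa_def Bb_def r sgn_if)
  then show ?thesis by (simp add: Th_def)
qed

lemma turning:
  assumes "\<bar>m\<bar> > 1" "f \<noteq> 0"
  shows "((\<lambda>t. signed_curvature (cx f m) (cy f m) t * speed (cx f m) (cy f m) t) has_integral 2*pi) {0..pi}"
proof -
  have "((\<lambda>t. Nf m t / Qf m t) has_integral (Th m pi - Th m 0)) {0..pi}"
  proof (rule fundamental_theorem_of_calculus)
    fix t assume "t \<in> {0..pi}"
    then have "(Th m has_real_derivative Nf m t / Qf m t) (at t)"
      using Th_deriv[OF assms(1)] by auto
    then show "(Th m has_vector_derivative Nf m t / Qf m t) (at t within {0..pi})"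
      by (simp add: has_real_derivative_iff_has_vector_derivative has_vector_derivative_at_within)
  qed simp
  then have "((\<lambda>t. Nf m t / Qf m t) has_integral 2*pi) {0..pi}"
    using Th0[OF assms(1)] Thpi[OF assms(1)] by simp
  then show ?thesis
    by (rule has_integral_eq[rotated]) (simp add: ks_eq[OF assms(2) Qf_pos[OF assms(1)]])
qed

definition "Ac m c = Pc m c * sqrt(2-c^2) - m*c - sqrt(2-c^2)"
definition "Kc m c = 2 * Ac m c / (Pc m c * sqrt (Pc m c))"

lemma sqrt_deriv2:
  assumes "c^2 < 2"
  shows "((\<lambda>c. sqrt (2 - c^2)) has_real_derivative (- c / sqrt (2 - c^2))) (at c within S)"
  using assms by (auto intro!: derivative_eq_intros simp: field_simps)

lemma Pc_deriv:
  assumes "c^2 < 2"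
  shows "(Pc m has_real_derivative
     (2*(m * sqrt(2-c^2) + c)*(1 - m*c/sqrt(2-c^2)) - 8*c)) (at c within S)"
  unfolding Pc_def[abs_def] using assms
  by (auto intro!: derivative_eq_intros sqrt_deriv2 simp: field_simps)

lemma Ac_deriv:
  assumes "c^2 < 2"
  shows "(Ac m has_real_derivative
     ((2*(m * sqrt(2-c^2) + c)*(1 - m*c/sqrt(2-c^2)) - 8*c) * sqrt(2-c^2) - Pc m c * c / sqrt(2-c^2)
       - m + c / sqrt(2-c^2))) (at c within S)"
  unfolding Ac_def[abs_def] using assms
  by (auto intro!: derivative_eq_intros sqrt_deriv2 Pc_deriv simp: field_simps)

lemma K_alg:
  fixes q a a1 p1 :: real
  assumes "q > 0"
  shows "(2 * a1 * (q^2 * q) - 2 * a * (p1 * q + q^2 * (p1 * inverse q / 2))) / (q^2 * q)^2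
    = (2 * a1 * q^2 - 3 * a * p1) / ((q^2)^2 * q)"
  using assms by (simp add: field_simps) algebra

lemma Kc_deriv:
  assumes "\<bar>m\<bar> > 1" "\<bar>c\<bar> \<le> 1"
  shows "(Kc m has_real_derivative (-12*(1+m^2)*(c + m * sqrt(2-c^2))/(sqrt(2-c^2)*(Pc m c)^2 * sqrt(Pc m c)))) (at c)"
proof -
  have c2: "c^2 \<le> 1" using assms(2) by (simp add: abs_square_le_1)
  have c2': "c^2 < 2" using c2 by simp
  have P: "Pc m c > 0" using Pc_pos assms by blast
  define w where "w = sqrt (2 - c^2)"
  define q where "q = sqrt (Pc m c)"
  define p1 where "p1 = 2*(m * w + c)*(1 - m*c/w) - 8*c"
  define a1 where "a1 = p1 * w - Pc m c * c / w - m + c / w"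
  have w2: "w^2 = 2 - c^2" using c2 by (simp add: w_def)
  have wpos: "w > 0" using c2 by (simp add: w_def)
  have qpos: "q > 0" using P by (simp add: q_def)
  have Pq: "Pc m c = q^2" using P by (simp add: q_def)
  have dP: "(Pc m has_real_derivative p1) (at c)"
    unfolding p1_def w_def by (rule Pc_deriv[OF c2'])
  have dA: "(Ac m has_real_derivative a1) (at c)"
    unfolding a1_def p1_def w_def by (rule Ac_deriv[OF c2'])
  have "(Kc m has_real_derivative
      (2 * a1 * (Pc m c * sqrt (Pc m c)) - 2 * Ac m c * (p1 * sqrt (Pc m c) + Pc m c * (p1 * inverse (sqrt (Pc m c)) / 2)))
        / (Pc m c * sqrt (Pc m c))^2) (at c)"
    unfolding Kc_def[abs_def] using P
    by (auto intro!: derivative_eq_intros dA dP simp: power2_eq_square)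
  also have "(2 * a1 * (Pc m c * sqrt (Pc m c)) - 2 * Ac m c * (p1 * sqrt (Pc m c) + Pc m c * (p1 * inverse (sqrt (Pc m c)) / 2)))
        / (Pc m c * sqrt (Pc m c))^2 = (2 * a1 * Pc m c - 3 * Ac m c * p1) / ((Pc m c)^2 * q)"
  proof -
    have sq: "sqrt (q^2) = q" using qpos by simp
    show ?thesis unfolding Pq sq by (rule K_alg[OF qpos])
  qed
  also have "2 * a1 * Pc m c - 3 * Ac m c * p1 = -12*(1+m^2)*(c + m * w) / w"
  proof -
    have Pw: "Pc m c = (m * w + c)^2 + 4*(1 - c^2)" by (simp add: Pc_def w_def)
    have Aw: "Ac m c = Pc m c * w - m*c - w" by (simp add: Ac_def w_def)
    show ?thesis unfolding a1_def p1_def Aw unfolding Pw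
      using wpos apply (simp add: field_simps) apply (insert w2) by algebra
  qed
  finally show ?thesis unfolding w_def q_def using wpos qpos P
    by (simp add: field_simps w_def)
qed

lemma powr32: "(x::real) > 0 \<Longrightarrow> x powr (3/2) = x * sqrt x"
proof -
  assume q: "x > 0"
  have "x powr (3/2) = x powr (1 + 1/2)" by simp
  also have "\<dots> = x * sqrt x" using q by (subst powr_add) (simp add: powr_half_sqrt)
  finally show ?thesis .
qed

lemma k_eq:
  assumes "f \<noteq> 0" "\<bar>m\<bar> > 1"
  shows "signed_curvature (cx f m) (cy f m) t = Kc m (cos t) / \<bar>f\<bar>"
proof -
  have P: "Pc m (cos t) > 0" using Pc_pos assms by simp
  have Q: "Qf m t > 0" using Qf_pos assms by blast
  have W: "Wf t > 0" by (rule Wf_pos)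
  have sc: "signed_curvature (cx f m) (cy f m) t = f^2 * Nf m t / ((f^2 * Qf m t) powr (3/2))"
    unfolding signed_curvature_def deriv_cx deriv_cy deriv_X1 deriv_Y1 cross_eq sq_eq
      Qf_def[symmetric] Nf_def[symmetric] ..
  also have "\<dots> = Nf m t / (\<bar>f\<bar> * Qf m t * sqrt (Qf m t))"
    using Q assms(1) by (simp add: powr32 real_sqrt_mult field_simps)
  also have "\<dots> = Kc m (cos t) / \<bar>f\<bar>"
  proof -
    have sq: "sqrt (Qf m t) = sqrt (Pc m (cos t)) / Wf t"
      using W by (simp add: Q_eq real_sqrt_divide)
    have sP: "sqrt (Pc m (cos t)) > 0" using P by simp
    show ?thesis
      unfolding N_eq sq unfolding Q_eq Kc_def Ac_def Wf_def[symmetric] Rf_def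
      using P W sP assms(1) apply (simp add: field_simps) by algebra
  qed
  finally show ?thesis .
qed

lemma Kc_mono:
  assumes "\<bar>m\<bar> > 1" "-1 \<le> u" "u \<le> v" "v \<le> 1"
  shows "(m > 1 \<longrightarrow> Kc m v \<le> Kc m u) \<and> (m < -1 \<longrightarrow> Kc m u \<le> Kc m v)"
proof -
  define D where "D c = -12*(1+m^2)*(c + m * sqrt(2-c^2))/(sqrt(2-c^2)*(Pc m c)^2 * sqrt(Pc m c))" for c
  have der: "(Kc m has_real_derivative D c) (at c)" if "u \<le> c" "c \<le> v" for c
    unfolding D_def using that assms by (intro Kc_deriv) auto
  have cont: "continuous_on {u..v} (Kc m)"
    by (rule continuous_at_imp_continuous_on) (use der DERIV_isCont in fastforce)
  have sgnD: "(m > 1 \<longrightarrow> D c \<le> 0) \<and> (m < -1 \<longrightarrow> D c \<ge> 0)" if "u \<le> c" "c \<le> v" for c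
  proof -
    have c1: "\<bar>c\<bar> \<le> 1" using that assms by auto
    have c2: "c^2 \<le> 1" using c1 by (simp add: abs_square_le_1)
    have w1: "sqrt (2 - c^2) \<ge> 1" using c2 by simp
    have P: "Pc m c > 0" using Pc_pos assms(1) c1 by blast
    have den: "sqrt(2-c^2)*(Pc m c)^2 * sqrt(Pc m c) > 0" using P w1 by simp
    have num1: "m > 1 \<longrightarrow> c + m * sqrt(2-c^2) > 0"
    proof
      assume m: "m > 1"
      have "m * 1 \<le> m * sqrt(2-c^2)" using m w1 by (intro mult_left_mono) auto
      then show "c + m * sqrt(2-c^2) > 0" using m c1 by (simp only: abs_le_iff) linarith
    qed
    have num2: "m < -1 \<longrightarrow> c + m * sqrt(2-c^2) < 0"
    proof
      assume m: "m < -1"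
      have "m * sqrt(2-c^2) \<le> m * 1" using m w1 by (intro mult_left_mono_neg) auto
      then show "c + m * sqrt(2-c^2) < 0" using m c1 by (simp only: abs_le_iff) linarith
    qed
    have mm: "-12*(1+m^2) < 0" using zero_le_power2[of m] by (smt (verit))
    show ?thesis unfolding D_def using num1 num2 den mm
      by (auto simp: divide_nonpos_pos divide_nonneg_pos mult_nonpos_nonpos mult_neg_pos mult_neg_neg
          intro!: divide_nonpos_pos divide_nonneg_pos mult_nonpos_nonneg mult_nonpos_nonpos)
  qed
  show ?thesis
  proof (intro conjI impI)
    assume m: "m > 1"
    show "Kc m v \<le> Kc m u"
      by (rule DERIV_nonpos_imp_decreasing_open[OF assms(3) _ cont]) (use der sgnD m in force)
  next
    assume m: "m < -1"
    show "Kc m u \<le> Kc m v"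
      by (rule DERIV_nonneg_imp_increasing_open[OF assms(3) _ cont]) (use der sgnD m in force)
  qed
qed

lemma speed_eq: "speed (cx f m) (cy f m) = (\<lambda>t. sqrt ((X1f f m t)^2 + (Y1f f m t)^2))"
  by (intro ext) (simp add: speed_def deriv_cx deriv_cy)

lemma speed_cont: "continuous_on S (speed (cx f m) (cy f m))"
proof -
  have "continuous_on S (X1f f m)" "continuous_on S (Y1f f m)"
    by (simp_all add: continuous_at_imp_continuous_on DERIV_isCont[OF X2_deriv] DERIV_isCont[OF Y2_deriv])
  then show ?thesis unfolding speed_eq by (intro continuous_intros)
qed

lemma speed_lb:
  assumes "f \<noteq> 0" "\<bar>m\<bar> > 1"
  shows "speed (cx f m) (cy f m) t \<ge> \<bar>f\<bar> * (\<bar>m\<bar> - 1) / 2"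
proof -
  have P: "Pc m (cos t) \<ge> (\<bar>m\<bar> - 1)^2" using Pc_ge assms(2) by simp
  have W2: "(Wf t)^2 \<le> 2" using Wf_sq[of t] by simp
  have W: "Wf t > 0" by (rule Wf_pos)
  have Q: "Qf m t \<ge> (\<bar>m\<bar> - 1)^2 / 4"
  proof -
    have "(\<bar>m\<bar> - 1)^2 / 4 \<le> (\<bar>m\<bar> - 1)^2 / (Wf t)^2"
      using W W2 by (intro divide_left_mono) auto
    also have "\<dots> \<le> Pc m (cos t) / (Wf t)^2" using P W by (intro divide_right_mono) auto
    finally show ?thesis by (simp add: Q_eq)
  qed
  have "(\<bar>f\<bar> * (\<bar>m\<bar> - 1) / 2)^2 = f^2 * ((\<bar>m\<bar> - 1)^2 / 4)"
    by (simp add: power_mult_distrib power_divide)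
  also have "\<dots> \<le> f^2 * Qf m t" using Q by (intro mult_left_mono) auto
  finally have "(\<bar>f\<bar> * (\<bar>m\<bar> - 1) / 2)^2 \<le> (X1f f m t)^2 + (Y1f f m t)^2"
    by (simp add: sq_eq Qf_def)
  then show ?thesis unfolding speed_eq by (rule real_le_rsqrt)
qed

lemma arclen_strict:
  assumes "f \<noteq> 0" "\<bar>m\<bar> > 1" "0 \<le> b" "b < a"
  shows "arclen (cx f m) (cy f m) b < arclen (cx f m) (cy f m) a"
proof -
  define sp where "sp = speed (cx f m) (cy f m)"
  define d where "d = \<bar>f\<bar> * (\<bar>m\<bar> - 1) / 2"
  have d: "d > 0" using assms by (simp add: d_def)
  have int: "sp integrable_on {0..a}" unfolding sp_def
    by (intro integrable_continuous_interval speed_cont)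
  have int2: "sp integrable_on {b..a}" unfolding sp_def
    by (intro integrable_continuous_interval speed_cont)
  have comb: "integral {0..b} sp + integral {b..a} sp = integral {0..a} sp"
    by (rule Henstock_Kurzweil_Integration.integral_combine[OF _ _ int]) (use assms in auto)
  have "integral {b..a} (\<lambda>_. d) \<le> integral {b..a} sp"
    using int2 speed_lb[OF assms(1,2)] by (intro integral_le) (auto simp: sp_def d_def)
  moreover have "integral {b..a} (\<lambda>_. d) = (a - b) * d" using assms by simp
  moreover have "(a - b) * d > 0" using d assms by simp
  ultimately show ?thesis using comb unfolding arclen_def sp_def by linarith
qed

lemma mono_part:
  assumes "f \<noteq> 0" "\<bar>m\<bar> > 1"
  shows "(\<forall>a\<in>{0..pi}. \<forall>b\<in>{0..pi}. arclen (cx f m) (cy f m) a \<le> arclen (cx f m) (cy f m) b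
            \<longrightarrow> signed_curvature (cx f m) (cy f m) a \<le> signed_curvature (cx f m) (cy f m) b)
       \<or> (\<forall>a\<in>{0..pi}. \<forall>b\<in>{0..pi}. arclen (cx f m) (cy f m) a \<le> arclen (cx f m) (cy f m) b
            \<longrightarrow> signed_curvature (cx f m) (cy f m) b \<le> signed_curvature (cx f m) (cy f m) a)"
proof -
  have key: "(m > 1 \<longrightarrow> Kc m (cos a) \<le> Kc m (cos b)) \<and> (m < -1 \<longrightarrow> Kc m (cos b) \<le> Kc m (cos a))"
    if ab: "a \<in> {0..pi}" "b \<in> {0..pi}" "arclen (cx f m) (cy f m) a \<le> arclen (cx f m) (cy f m) b" for a b
  proof -
    have "a \<le> b"
    proof (rule ccontr)
      assume "\<not> a \<le> b"
      then have "arclen (cx f m) (cy f m) b < arclen (cx f m) (cy f m) a"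
        using ab by (intro arclen_strict assms) auto
      then show False using ab by linarith
    qed
    then have "cos b \<le> cos a" using ab by (intro cos_monotone_0_pi_le) auto
    then show ?thesis using Kc_mono[OF assms(2), of "cos b" "cos a"] by simp
  qed
  have fpos: "\<bar>f\<bar> > 0" using assms by simp
  show ?thesis
  proof (cases "m > 1")
    case True
    then show ?thesis using key fpos unfolding k_eq[OF assms]
      by (intro disjI1 ballI impI) (simp add: divide_right_mono)
  next
    case False
    then have "m < -1" using assms by auto
    then show ?thesis using key fpos unfolding k_eq[OF assms]
      by (intro disjI2 ballI impI) (simp add: divide_right_mono)
  qed
qed

theorem mainTheorem1:
  fixes f \<mu> :: real
  assumes hf: "f \<noteq> 0" and hmu: "\<mu> \<notin> {0, 1, -1}"
  defines "x \<equiv> cx f \<mu>" and "y \<equiv> cy f \<mu>"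
  defines "k \<equiv> signed_curvature x y"
  shows
   "(x 0, y 0) = (f * (\<mu> + 1), 0)
    \<and> unit_tangent x y 0 = (cos (pi/2 * sgn (f * (\<mu> + 1))), sin (pi/2 * sgn (f * (\<mu> + 1))))
    \<and> k 0 = 2 * \<mu> / (\<bar>f\<bar> * \<bar>\<mu> + 1\<bar> * (\<mu> + 1))
    \<and> (x pi, y pi) = (f * (\<mu> - 1), 0)
    \<and> unit_tangent x y pi = (cos (pi/2 * sgn (f * (\<mu> - 1))), sin (pi/2 * sgn (f * (\<mu> - 1))))
    \<and> k pi = 2 * \<mu> / (\<bar>f\<bar> * \<bar>\<mu> - 1\<bar> * (\<mu> - 1))
    \<and> osc_center x y 0 = (f * (\<mu>^2 - 1) / (2 * \<mu>), 0)
    \<and> osc_center x y pi = (f * (\<mu>^2 - 1) / (2 * \<mu>), 0)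
    \<and> (\<bar>\<mu>\<bar> > 1 \<longrightarrow>
        ((\<forall>a\<in>{0..pi}. \<forall>b\<in>{0..pi}. arclen x y a \<le> arclen x y b \<longrightarrow> k a \<le> k b)
         \<or> (\<forall>a\<in>{0..pi}. \<forall>b\<in>{0..pi}. arclen x y a \<le> arclen x y b \<longrightarrow> k b \<le> k a))
        \<and> ((\<lambda>t. k t * speed x y t) has_integral 2 * pi) {0..pi})"
proof -
  have m0: "\<mu> \<noteq> 0" and m1: "\<mu> \<noteq> 1" and m2: "\<mu> \<noteq> -1" using hmu by auto
  have z1: "\<mu> + 1 \<noteq> 0" and z2: "\<mu> - 1 \<noteq> 0" using m1 m2 by auto
  note A0 = at0[OF hf m0 m2] and Api = atpi[OF hf m0 m1]
  have p0: "(x 0, y 0) = (f * (\<mu> + 1), 0)"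
    by (simp add: x_def y_def cx_def cy_def rad_def)
  have ppi: "(x pi, y pi) = (f * (\<mu> - 1), 0)"
    by (simp add: x_def y_def cx_def cy_def rad_def algebra_simps)
  have t0: "unit_tangent x y 0 = (cos (pi/2 * sgn (f * (\<mu> + 1))), sin (pi/2 * sgn (f * (\<mu> + 1))))"
    unfolding x_def y_def A0(1) using hf z1 by (intro tangent_form) simp
  have tpi: "unit_tangent x y pi = (cos (pi/2 * sgn (f * (\<mu> - 1))), sin (pi/2 * sgn (f * (\<mu> - 1))))"
    unfolding x_def y_def Api(1) using hf z2 by (intro tangent_form) simp
  have k0: "k 0 = 2 * \<mu> / (\<bar>f\<bar> * \<bar>\<mu> + 1\<bar> * (\<mu> + 1))"
    unfolding k_def x_def y_def A0(2) by (rule curv_form[OF hf z1])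
  have kpi: "k pi = 2 * \<mu> / (\<bar>f\<bar> * \<bar>\<mu> - 1\<bar> * (\<mu> - 1))"
    unfolding k_def x_def y_def Api(2) by (rule curv_form[OF hf z2])
  have c0: "osc_center x y 0 = (f * (\<mu>^2 - 1) / (2 * \<mu>), 0)"
    unfolding x_def y_def A0(3) using center_form[OF hf m0, of 1] by simp
  have cpi: "osc_center x y pi = (f * (\<mu>^2 - 1) / (2 * \<mu>), 0)"
    unfolding x_def y_def Api(3) using center_form[OF hf m0, of "-1"] by simp
  have iii: "\<bar>\<mu>\<bar> > 1 \<longrightarrow>
        ((\<forall>a\<in>{0..pi}. \<forall>b\<in>{0..pi}. arclen x y a \<le> arclen x y b \<longrightarrow> k a \<le> k b)
         \<or> (\<forall>a\<in>{0..pi}. \<forall>b\<in>{0..pi}. arclen x y a \<le> arclen x y b \<longrightarrow> k b \<le> k a))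
        \<and> ((\<lambda>t. k t * speed x y t) has_integral 2 * pi) {0..pi}"
    unfolding k_def x_def y_def using mono_part[OF hf] turning[OF _ hf] by blast
  show ?thesis using p0 ppi t0 tpi k0 kpi c0 cpi iii by blast
qed

end
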